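(* Let $L$ be a finite-dimensional pure, nonnilpotent, solvable Lie algebra over $\mathbb{C}$ of breadth $2$ such that $\dim[L,L]=3$ and $\dim\big(L/Z(L)\big)=3$. Then $L$ has a basis $\{x_1,x_2,x_3,z\}$ in which the only nonzero brackets of basis elements (up to antisymmetry) are $[x_1,x_2]=x_2$, $[x_1,x_3]=-x_3$ and $[x_2,x_3]=z$.
   Context: For $x\in L$, the breadth of $x$ is $b(x)=\mathrm{rank}(\mathrm{ad}_x)$, and the breadth of $L$ is $b(L)=\max\{b(x)\mid x\in L\}$. A Lie algebra $L$ is pure (or stem) if it has no abelian ideal as a direct summand; equivalently $Z(L)\subseteq[L,L]$. $Z(L)$ denotes the center of $L$. *)

theory Defs
  imports "HOL-Analysis.Analysis"
begin

definition lie_algebra :: "(complex \<Rightarrow> 'a::ab_group_add \<Rightarrow> 'a) \<Rightarrow> ('a \<Rightarrow> 'a \<Rightarrow> 'a) \<Rightarrow> bool" where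
  "lie_algebra sc br \<longleftrightarrow>
     vector_space sc \<and>
     (\<forall>x. Vector_Spaces.linear sc sc (br x)) \<and>
     (\<forall>y. Vector_Spaces.linear sc sc (\<lambda>x. br x y)) \<and>
     (\<forall>x. br x x = 0) \<and>
     (\<forall>x y z. br x (br y z) + br y (br z x) + br z (br x y) = 0)"

definition fin_dim_space :: "(complex \<Rightarrow> 'a::ab_group_add \<Rightarrow> 'a) \<Rightarrow> bool" where
  "fin_dim_space sc \<longleftrightarrow> (\<exists>B. finite B \<and> module.span sc B = UNIV)"

definition lie_br_set :: "(complex \<Rightarrow> 'a::ab_group_add \<Rightarrow> 'a) \<Rightarrow> ('a \<Rightarrow> 'a \<Rightarrow> 'a) \<Rightarrow> 'a set \<Rightarrow> 'a set \<Rightarrow> 'a set" where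
  "lie_br_set sc br A B = module.span sc {br a b | a b. a \<in> A \<and> b \<in> B}"

definition lie_center :: "('a \<Rightarrow> 'a \<Rightarrow> 'a::ab_group_add) \<Rightarrow> 'a set" where
  "lie_center br = {z. \<forall>x. br z x = 0}"

fun lower_central :: "(complex \<Rightarrow> 'a::ab_group_add \<Rightarrow> 'a) \<Rightarrow> ('a \<Rightarrow> 'a \<Rightarrow> 'a) \<Rightarrow> nat \<Rightarrow> 'a set" where
  "lower_central sc br 0 = UNIV"
| "lower_central sc br (Suc k) = lie_br_set sc br UNIV (lower_central sc br k)"

fun derived_series :: "(complex \<Rightarrow> 'a::ab_group_add \<Rightarrow> 'a) \<Rightarrow> ('a \<Rightarrow> 'a \<Rightarrow> 'a) \<Rightarrow> nat \<Rightarrow> 'a set" where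
  "derived_series sc br 0 = UNIV"
| "derived_series sc br (Suc k) = lie_br_set sc br (derived_series sc br k) (derived_series sc br k)"

definition lie_nilpotent where
  "lie_nilpotent sc br \<longleftrightarrow> (\<exists>k. lower_central sc br k = {0})"

definition lie_solvable where
  "lie_solvable sc br \<longleftrightarrow> (\<exists>k. derived_series sc br k = {0})"

definition lie_pure where
  "lie_pure sc br \<longleftrightarrow> lie_center br \<subseteq> lie_br_set sc br UNIV UNIV"

definition elem_breadth :: "(complex \<Rightarrow> 'a::ab_group_add \<Rightarrow> 'a) \<Rightarrow> ('a \<Rightarrow> 'a \<Rightarrow> 'a) \<Rightarrow> 'a \<Rightarrow> nat" where
  "elem_breadth sc br x = vector_space.dim sc (range (br x))"

definition lie_breadth :: "(complex \<Rightarrow> 'a::ab_group_add \<Rightarrow> 'a) \<Rightarrow> ('a \<Rightarrow> 'a \<Rightarrow> 'a) \<Rightarrow> nat" where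
  "lie_breadth sc br = Max (range (elem_breadth sc br))"

end

theory Submission
  imports Defs
begin

no_notation vector_scalar_mult (infixl "*s" 70)

locale lie_fd = finite_dimensional_vector_space sc Bs
  for sc :: "complex \<Rightarrow> 'a::ab_group_add \<Rightarrow> 'a" (infixr "*s" 75) and Bs :: "'a set" +
  fixes br :: "'a \<Rightarrow> 'a \<Rightarrow> 'a"
  assumes lin_r: "\<And>x. Vector_Spaces.linear sc sc (br x)"
  and lin_l: "\<And>y. Vector_Spaces.linear sc sc (\<lambda>x. br x y)"
  and alt: "\<And>x. br x x = 0"
  and jacobi: "\<And>x y z. br x (br y z) + br y (br z x) + br z (br x y) = 0"
begin

lemma br_add_r[simp]: "br x (y + z) = br x y + br x z"
  using lin_r[of x] unfolding Vector_Spaces.linear_iff by blast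
lemma br_add_l[simp]: "br (x + y) z = br x z + br y z"
  using lin_l[of z] unfolding Vector_Spaces.linear_iff by blast
lemma br_scale_r[simp]: "br x (c *s y) = c *s br x y"
  using lin_r[of x] unfolding Vector_Spaces.linear_iff by blast
lemma br_scale_l[simp]: "br (c *s x) y = c *s br x y"
  using lin_l[of y] unfolding Vector_Spaces.linear_iff by blast
lemma br_0_r[simp]: "br x 0 = 0"
  by (metis br_scale_r scale_zero_left)
lemma br_0_l[simp]: "br 0 x = 0"
  by (metis br_scale_l scale_zero_left)
lemma br_neg_r[simp]: "br x (- y) = - br x y"
  by (metis add_eq_0_iff br_0_r br_add_r)
lemma br_neg_l[simp]: "br (- x) y = - br x y"
  by (metis add_eq_0_iff br_0_l br_add_l)
lemma br_diff_r[simp]: "br x (y - z) = br x y - br x z"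
  by (metis br_add_r br_neg_r diff_conv_add_uminus)
lemma br_diff_l[simp]: "br (x - y) z = br x z - br y z"
  by (metis br_add_l br_neg_l diff_conv_add_uminus)
lemma br_anti: "br y x = - br x y"
proof -
  have "br (x + y) (x + y) = br x x + br y x + (br x y + br y y)"
    by (simp only: br_add_l br_add_r)
  then have "br y x + br x y = 0" by (metis alt add_0_left add_0_right)
  then show ?thesis by (simp add: eq_neg_iff_add_eq_0)
qed

lemma neg_in_span[simp]: "(- a \<in> span S) = (a \<in> span S)"
  by (metis minus_minus span_neg)

lemma br_span:
  assumes "a \<in> span A" "b \<in> span B"
  shows "br a b \<in> span {br x y | x y. x \<in> A \<and> y \<in> B}"
proof -
  let ?S = "{br x y | x y. x \<in> A \<and> y \<in> B}"
  have 1: "br x b \<in> span ?S" if "x \<in> A" for x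
    using assms(2)
  proof (induction b rule: span_induct_alt)
    case base then show ?case by (simp add: span_zero)
  next
    case (step c y w)
    have "br x y \<in> ?S" using that step by blast
    then show ?case using step by (simp add: span_add span_scale span_base)
  qed
  show ?thesis using assms(1)
  proof (induction a rule: span_induct_alt)
    case base then show ?case by (simp add: span_zero)
  next
    case (step c y w)
    then show ?case using 1 by (simp add: span_add span_scale)
  qed
qed

abbreviation "Zc \<equiv> lie_center br"
abbreviation "Dr \<equiv> lie_br_set sc br UNIV UNIV"

lemma center_l: "z \<in> Zc \<Longrightarrow> br z x = 0"
  unfolding lie_center_def by simp
lemma center_r: "z \<in> Zc \<Longrightarrow> br x z = 0"
  using center_l br_anti by (metis neg_0_equal_iff_equal)

lemma subspace_Zc: "subspace Zc"
  unfolding subspace_def lie_center_def by simp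

lemma span_Zc[simp]: "span Zc = Zc"
  by (simp add: span_eq_iff subspace_Zc)

lemma Dr_eq: "Dr = span {br x y | x y. x \<in> UNIV \<and> y \<in> UNIV}"
  unfolding lie_br_set_def by simp

lemma span_Dr[simp]: "span Dr = Dr"
  unfolding Dr_eq by (simp add: span_span)

lemma coord3:
  assumes "v \<in> span {p, q, r}"
  shows "\<exists>\<alpha> \<beta> \<gamma>. v = \<alpha> *s p + \<beta> *s q + \<gamma> *s r"
proof -
  obtain \<alpha> where 1: "v - \<alpha> *s p \<in> span {q, r}" using assms span_breakdown_eq by blast
  obtain \<beta> where 2: "v - \<alpha> *s p - \<beta> *s q \<in> span {r}" using 1 span_breakdown_eq by blast
  obtain \<gamma> where 3: "v - \<alpha> *s p - \<beta> *s q - \<gamma> *s r \<in> span {}" using 2 span_breakdown_eq by blast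
  have "v - \<alpha> *s p - \<beta> *s q - \<gamma> *s r = 0" using 3 by simp
  then have "v = \<alpha> *s p + \<beta> *s q + \<gamma> *s r" by (simp add: algebra_simps)
  then show ?thesis by blast
qed

lemma coord_ins:
  assumes "v \<in> span (insert p S)"
  shows "\<exists>\<alpha> w. w \<in> span S \<and> v = \<alpha> *s p + w"
  using assms span_breakdown_eq by (metis add.commute diff_add_cancel)

lemma indep3:
  assumes "independent {p, q, r}" "p \<noteq> q" "p \<noteq> r" "q \<noteq> r"
    "\<alpha> *s p + \<beta> *s q + \<gamma> *s r = 0"
  shows "\<alpha> = 0 \<and> \<beta> = 0 \<and> \<gamma> = 0"
proof -
  let ?c = "\<lambda>v. if v = p then \<alpha> else if v = q then \<beta> else \<gamma>"
  have S: "(\<Sum>v\<in>{p,q,r}. ?c v *s v) = 0"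
    using assms by (simp add: add.assoc)
  from assms(1) have H: "\<And>c. (\<Sum>v\<in>{p,q,r}. c v *s v) = 0 \<Longrightarrow> \<forall>v\<in>{p,q,r}. c v = 0"
    unfolding independent_explicit by blast
  have "\<forall>v\<in>{p,q,r}. ?c v = 0" by (rule H[OF S])
  then show ?thesis using assms by auto
qed

lemma indep_card:
  assumes "finite S" "V \<subseteq> span S" "S \<subseteq> V" "card S \<le> dim V"
  shows "independent S \<and> card S = dim V"
  using assms card_le_dim_spanning dim_le_card by (meson le_antisym)

lemma distinct4: "card {a, b, c, d} = 4 \<Longrightarrow> distinct [a, b, c, d]"
  by (auto simp: card_insert_if split: if_splits)

lemma distinct3: "card {a, b, c} = 3 \<Longrightarrow> distinct [a, b, c]"
  by (auto simp: card_insert_if split: if_splits)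

lemma card3_le: "card {a, b, c} \<le> 3"
  using card_length[of "[a, b, c]"] by simp

lemma card4_le: "card {a, b, c, d} \<le> 4"
  using card_length[of "[a, b, c, d]"] by simp

lemma card2_le: "card {a, b} \<le> 2"
  using card_length[of "[a, b]"] by simp

lemma comb3:
  "u *s (a1 *s p + a2 *s q + a3 *s r) + w *s (b1 *s p + b2 *s q + b3 *s r)
    = (u*a1 + w*b1) *s p + (u*a2 + w*b2) *s q + (u*a3 + w*b3) *s r"
  by (simp add: algebra_simps)

lemma br_in_Dr[simp]: "br a b \<in> Dr"
  unfolding lie_br_set_def by (rule span_base) blast

lemma lc_sub_Z:
  assumes "S \<subseteq> Zc"
  shows "lie_br_set sc br UNIV S = {0}"
proof -
  have "{br a b |a b. a \<in> UNIV \<and> b \<in> S} \<subseteq> {0}" using assms center_r by auto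
  then have "span {br a b |a b. a \<in> UNIV \<and> b \<in> S} \<subseteq> span {0}" by (rule span_mono)
  then show ?thesis unfolding lie_br_set_def using span_zero by auto
qed

lemma pairs3:
  assumes "br u1 u2 \<in> span T" "br u1 u3 \<in> span T" "br u2 u3 \<in> span T"
    "a \<in> insert u1 (insert u2 (insert u3 Zc))" "b \<in> insert u1 (insert u2 (insert u3 Zc))"
  shows "br a b \<in> span T"
proof -
  have z: "br a b \<in> span T" if "a \<in> Zc \<or> b \<in> Zc"
    using that center_l center_r span_zero by auto
  have m: "br a b \<in> span T" if "a \<in> {u1, u2, u3}" "b \<in> {u1, u2, u3}"
  proof -
    have r: "br u2 u1 \<in> span T" "br u3 u1 \<in> span T" "br u3 u2 \<in> span T"
      using assms(1-3) br_anti[of u1 u2] br_anti[of u1 u3] br_anti[of u2 u3] by simp_all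
    have d: "br u u \<in> span T" for u by (simp add: alt span_zero)
    from that show ?thesis using assms(1-3) r d by auto
  qed
  show ?thesis using assms(4,5) z m by blast
qed

lemma Dr_sub:
  assumes "span B = UNIV" "\<And>a b. a \<in> B \<Longrightarrow> b \<in> B \<Longrightarrow> br a b \<in> span T"
  shows "Dr \<subseteq> span T"
proof -
  have "br a b \<in> span T" for a b
  proof -
    have "br a b \<in> span {br u v | u v. u \<in> B \<and> v \<in> B}"
      using br_span[of a B b B] assms(1) by simp
    moreover have "span {br u v | u v. u \<in> B \<and> v \<in> B} \<subseteq> span T"
    proof (rule span_minimal)
      show "{br u v | u v. u \<in> B \<and> v \<in> B} \<subseteq> span T" using assms(2) by blast
    qed (rule subspace_span)
    ultimately show ?thesis by blast
  qed
  then show ?thesis unfolding lie_br_set_def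
  proof (intro span_minimal)
    assume *: "\<And>a b. br a b \<in> span T"
    show "{br a b |a b. a \<in> UNIV \<and> b \<in> UNIV} \<subseteq> span T" using * by blast
  qed (rule subspace_span)
qed

lemma no_k2:
  assumes nonnil: "\<And>k. lower_central sc br k \<noteq> {0}"
    and dD: "dim Dr = 3" and dU: "dim (UNIV::'a set) = dim Zc + 3" and dZ: "dim Zc = 2"
    and pure: "Zc \<subseteq> Dr"
  shows False
proof -
  have "\<not> Dr \<subseteq> Zc"
  proof
    assume "Dr \<subseteq> Zc"
    then have "dim Dr \<le> dim Zc" by (rule dim_subset)
    with dD dZ show False by simp
  qed
  then obtain d0 where d0: "d0 \<in> Dr" "d0 \<notin> Zc" by blast
  have dim_ins: "dim (insert d0 Zc) = 3" using d0 dZ by (simp add: dim_insert)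
  have DZ: "span (insert d0 Zc) = Dr"
    using dim_eq_span[of "insert d0 Zc" Dr] d0 pure dim_ins dD by simp
  have "\<exists>x. br x d0 \<notin> Zc"
  proof (rule ccontr)
    assume "\<not> ?thesis" then have H: "\<And>x. br x d0 \<in> Zc" by blast
    have inZ: "br a b \<in> Zc" if "b \<in> Dr" for a b
    proof -
      from that DZ obtain \<alpha> w where "w \<in> span Zc" "b = \<alpha> *s d0 + w" using coord_ins by blast
      then show ?thesis using H[of a] center_r[of w a] by (simp add: subspace_scale[OF subspace_Zc])
    qed
    have "lower_central sc br (Suc (Suc 0)) = span {br a b |a b. a \<in> UNIV \<and> b \<in> Dr}"
      by (simp add: lie_br_set_def)
    also have "\<dots> \<subseteq> Zc"
    proof (rule span_minimal)
      show "{br a b |a b. a \<in> UNIV \<and> b \<in> Dr} \<subseteq> Zc" using inZ by blast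
    qed (rule subspace_Zc)
    finally have "lower_central sc br (Suc (Suc (Suc 0))) = {0}"
      using lc_sub_Z by simp
    with nonnil show False by blast
  qed
  then obtain x where x: "br x d0 \<notin> Zc" by blast
  obtain l z0 where z0: "z0 \<in> Zc" "br x d0 = l *s d0 + z0"
    using coord_ins[of "br x d0" d0 Zc] DZ by auto
  have lam: "l \<noteq> 0" using x z0 by auto
  have xn: "x \<notin> span (insert d0 Zc)"
  proof
    assume "x \<in> span (insert d0 Zc)"
    then obtain \<alpha> w where "w \<in> Zc" "x = \<alpha> *s d0 + w" using coord_ins by force
    then have "br x d0 = 0" by (simp add: alt center_l)
    then show False using x subspace_Zc subspace_0 by auto
  qed
  have dim2: "dim (insert x (insert d0 Zc)) = dim Zc + 2" using xn d0 by (simp add: dim_insert)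
  have "span (insert x (insert d0 Zc)) \<noteq> UNIV"
  proof
    assume "span (insert x (insert d0 Zc)) = UNIV"
    then have "dim (insert x (insert d0 Zc)) = dim (UNIV::'a set)" by (metis dim_span)
    with dim2 dU show False by simp
  qed
  then obtain y where yn: "y \<notin> span (insert x (insert d0 Zc))" by blast
  let ?B = "insert y (insert x (insert d0 Zc))"
  have "dim ?B = dim (UNIV :: 'a set)" using yn dim2 dU by (simp add: dim_insert)
  then have spB: "span ?B = UNIV" using dim_eq_full dim_UNIV dimension_def by metis
  obtain \<beta> z2 where z2: "z2 \<in> Zc" "br d0 y = \<beta> *s d0 + z2"
    using coord_ins[of "br d0 y" d0 Zc] DZ by auto
  obtain \<alpha> z1 where z1: "z1 \<in> Zc" "br x y = \<alpha> *s d0 + z1"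
    using coord_ins[of "br x y" d0 Zc] DZ by auto
  have J: "br x (br d0 y) + br d0 (br y x) + br y (br x d0) = 0" by (rule jacobi)
  have e1: "br x (br d0 y) = \<beta> *s (l *s d0 + z0)" using z2 z0 by (simp add: center_r)
  have yx: "br y x = - (\<alpha> *s d0 + z1)" by (simp only: br_anti[of y x] z1(2))
  have e2: "br d0 (br y x) = 0" unfolding yx using z1(1) by (simp add: alt center_r)
  have yd0: "br y d0 = - (\<beta> *s d0 + z2)" by (simp only: br_anti[of y d0] z2(2))
  have e3: "br y (br x d0) = - (l *s (\<beta> *s d0 + z2))"
    using z0 by (simp add: center_r yd0 algebra_simps)
  have "\<beta> *s z0 - l *s z2 = 0" using J unfolding e1 e2 e3 by (simp add: algebra_simps)
  then have "l *s z2 = \<beta> *s z0" by simp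
  then have "z2 = (\<beta> / l) *s z0" using lam
    by (metis (no_types, lifting) divide_inverse mult.commute nonzero_eq_divide_eq scale_scale scale_one)
  then have d0y: "br d0 y = (\<beta> / l) *s br x d0" using z0 z2 lam
    by (simp add: scale_right_distrib)
  let ?T = "{br x d0, br x y}"
  have "Dr \<subseteq> span ?T"
  proof (rule Dr_sub[OF spB])
    fix a b assume "a \<in> ?B" "b \<in> ?B"
    then have "a \<in> insert x (insert d0 (insert y Zc))" "b \<in> insert x (insert d0 (insert y Zc))" by auto
    then show "br a b \<in> span ?T"
      by (rule pairs3[rotated 3]) (auto simp: d0y intro: span_base span_scale)
  qed
  then have "dim Dr \<le> card ?T" by (rule dim_le_card) auto
  with dD card2_le[of "br x d0" "br x y"] show False by simp
qed

lemma final: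
  assumes spU: "span {x, d1, d2, z} = UNIV" and dU: "dim (UNIV::'a set) = 4" and zZ: "z \<in> Zc"
    and hh: "h \<noteq> 0" "br d1 d2 = h *s z"
    and h1: "br x d1 = a *s d1 + c *s d2 + k1 *s z"
    and h2: "br x d2 = b *s d1 + (- a) *s d2 + k2 *s z"
    and mu: "\<mu> \<noteq> 0"
    and eq1: "p*a + q*b = \<mu>*p" "p*c - q*a = \<mu>*q"
    and eq2: "p'*a + q'*b = -\<mu>*p'" "p'*c - q'*a = -\<mu>*q'"
    and det: "p*q' - q*p' \<noteq> 0"
  shows "\<exists>x1 x2 x3 z.
           distinct [x1, x2, x3, z] \<and>
           \<not> dependent {x1, x2, x3, z} \<and>
           span {x1, x2, x3, z} = UNIV \<and>
           br x1 x2 = x2 \<and> br x1 x3 = - x3 \<and> br x2 x3 = z \<and>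
           br x1 z = 0 \<and> br x2 z = 0 \<and> br x3 z = 0"
proof -
  define t where "t = (p*k1 + q*k2)/\<mu>"
  define t' where "t' = - (p'*k1 + q'*k2)/\<mu>"
  define x1 where "x1 = (1/\<mu>) *s x"
  define y2 where "y2 = p *s d1 + q *s d2 + t *s z"
  define y3 where "y3 = p' *s d1 + q' *s d2 + t' *s z"
  define w where "w = (p*q' - q*p') * h"
  define z' where "z' = w *s z"
  have wnz: "w \<noteq> 0" using det hh unfolding w_def by simp
  have c1: "p*a + q*b = \<mu>*p" "p*c + q*(-a) = \<mu>*q" "p*k1 + q*k2 = \<mu>*t"
    using eq1 mu by (simp_all add: t_def algebra_simps, simp add: field_simps)
  have c2: "p'*a + q'*b = (-\<mu>)*p'" "p'*c + q'*(-a) = (-\<mu>)*q'" "p'*k1 + q'*k2 = (-\<mu>)*t'"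
    using eq2 mu by (simp_all add: t'_def algebra_simps, simp add: field_simps)
  have "br x y2 = p *s (a *s d1 + c *s d2 + k1 *s z) + q *s (b *s d1 + (- a) *s d2 + k2 *s z)"
    unfolding y2_def using zZ by (simp add: h1 h2 center_r del: scale_minus_left)
  also have "\<dots> = (p*a + q*b) *s d1 + (p*c + q*(-a)) *s d2 + (p*k1 + q*k2) *s z"
    by (rule comb3)
  also have "\<dots> = (\<mu>*p) *s d1 + (\<mu>*q) *s d2 + (\<mu>*t) *s z"
    by (simp only: c1)
  also have "\<dots> = \<mu> *s y2" unfolding y2_def by (simp add: scale_right_distrib)
  finally have xy2: "br x y2 = \<mu> *s y2" .
  have "br x y3 = p' *s (a *s d1 + c *s d2 + k1 *s z) + q' *s (b *s d1 + (- a) *s d2 + k2 *s z)"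
    unfolding y3_def using zZ by (simp add: h1 h2 center_r del: scale_minus_left)
  also have "\<dots> = (p'*a + q'*b) *s d1 + (p'*c + q'*(-a)) *s d2 + (p'*k1 + q'*k2) *s z"
    by (rule comb3)
  also have "\<dots> = ((-\<mu>)*p') *s d1 + ((-\<mu>)*q') *s d2 + ((-\<mu>)*t') *s z"
    by (simp only: c2)
  also have "\<dots> = (-\<mu>) *s y3" unfolding y3_def by (simp only: scale_right_distrib scale_scale)
  finally have xy3: "br x y3 = (-\<mu>) *s y3" .
  have r1: "br x1 y2 = y2" unfolding x1_def using mu by (simp add: xy2)
  have r2: "br x1 y3 = - y3" unfolding x1_def using mu by (simp add: xy3)
  have r3: "br y2 y3 = z'"
    unfolding y2_def y3_def z'_def w_def using zZ hh
    by (simp add: center_r center_l alt br_anti[of d2 d1] algebra_simps)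
  have r4: "br x1 z' = 0" "br y2 z' = 0" "br y3 z' = 0"
    unfolding z'_def using zZ by (simp_all add: center_r)
  let ?S = "{x1, y2, y3, z'}"
  have zS: "z \<in> span ?S"
  proof -
    have "z = (1/w) *s z'" unfolding z'_def using wnz by simp
    then show ?thesis by (metis insertCI span_base span_scale)
  qed
  have xS: "x \<in> span ?S"
  proof -
    have "x = \<mu> *s x1" unfolding x1_def using mu by simp
    then show ?thesis by (metis insertCI span_base span_scale)
  qed
  have y2S: "y2 \<in> span ?S" "y3 \<in> span ?S" by (simp_all add: span_base)
  have "q' *s y2 - q *s y3 = (p*q' - q*p') *s d1 + (q'*t - q*t') *s z"
    unfolding y2_def y3_def by (simp add: algebra_simps)
  then have "d1 = (1/(p*q' - q*p')) *s ((q' *s y2 - q *s y3) - (q'*t - q*t') *s z)"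
    using det by simp
  then have d1S: "d1 \<in> span ?S"
    using zS y2S by (metis span_diff span_scale)
  have "p *s y3 - p' *s y2 = (p*q' - q*p') *s d2 + (p*t' - p'*t) *s z"
    unfolding y2_def y3_def by (simp add: algebra_simps)
  then have "d2 = (1/(p*q' - q*p')) *s ((p *s y3 - p' *s y2) - (p*t' - p'*t) *s z)"
    using det by simp
  then have d2S: "d2 \<in> span ?S"
    using zS y2S by (metis span_diff span_scale)
  have "span {x, d1, d2, z} \<subseteq> span ?S"
    using xS d1S d2S zS by (intro span_minimal) auto
  then have spS: "span ?S = UNIV" using spU by auto
  have "dim (UNIV::'a set) \<le> card ?S" by (rule dim_le_card) (use spS in auto)
  then have cS: "card ?S = 4" using card4_le[of x1 y2 y3 z'] dU by simp
  have "independent ?S"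
    using card_le_dim_spanning[of ?S UNIV] spS cS dU by auto
  moreover have "distinct [x1, y2, y3, z']" by (rule distinct4[OF cS])
  ultimately show ?thesis using spS r1 r2 r3 r4 by blast
qed

lemma k1:
  assumes dD: "dim Dr = 3" and dU: "dim (UNIV::'a set) = 4" and dZ: "dim Zc = 1"
    and pure: "Zc \<subseteq> Dr" and DU: "Dr \<noteq> UNIV"
  shows "\<exists>x1 x2 x3 z.
           distinct [x1, x2, x3, z] \<and>
           \<not> dependent {x1, x2, x3, z} \<and>
           span {x1, x2, x3, z} = UNIV \<and>
           br x1 x2 = x2 \<and> br x1 x3 = - x3 \<and> br x2 x3 = z \<and>
           br x1 z = 0 \<and> br x2 z = 0 \<and> br x3 z = 0"
proof -
  obtain Bz where Bz: "finite Bz" "Bz \<subseteq> Zc" "independent Bz" "span Bz = Zc" "card Bz = dim Zc"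
    using basis_subspace_exists[OF subspace_Zc] by blast
  then obtain z where zB: "Bz = {z}" using dZ card_1_singleton_iff[of Bz] by auto
  have zZ: "z \<in> Zc" and spz: "span {z} = Zc" and znz: "z \<noteq> 0"
    using Bz zB by auto
  have "\<not> Dr \<subseteq> span {z}"
  proof
    assume "Dr \<subseteq> span {z}"
    then have "dim Dr \<le> dim {z}" by (rule dim_mono)
    with dD znz show False by simp
  qed
  then obtain d1 where d1: "d1 \<in> Dr" "d1 \<notin> span {z}" by blast
  have dim2: "dim {d1, z} = 2" using d1 znz by (simp add: dim_insert)
  have "\<not> Dr \<subseteq> span {d1, z}"
  proof
    assume "Dr \<subseteq> span {d1, z}"
    then have "dim Dr \<le> dim {d1, z}" by (rule dim_mono)
    with dD dim2 show False by simp
  qed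
  then obtain d2 where d2: "d2 \<in> Dr" "d2 \<notin> span {d1, z}" by blast
  have dim3: "dim {d2, d1, z} = 3" using d2 dim2 by (simp add: dim_insert)
  have sub: "{d2, d1, z} \<subseteq> Dr" using d1 d2 zZ pure by auto
  have "span {d2, d1, z} = span Dr"
    by (rule dim_eq_span[OF sub]) (simp add: dim3 dD)
  then have spD0: "span {d2, d1, z} = Dr" by simp
  then have spD: "span {d1, d2, z} = Dr" by (simp add: insert_commute)
  have dim3': "dim {d1, d2, z} = 3" using dim3 by (simp add: insert_commute)
  obtain x where x: "x \<notin> Dr" using DU by blast
  have xn: "x \<notin> span {d2, d1, z}" using x spD0 by simp
  have dim4: "dim {x, d2, d1, z} = 4" using xn dim3 by (simp add: dim_insert[of x "{d2, d1, z}"])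
  then have "span {x, d2, d1, z} = UNIV" using dim_eq_full dim_UNIV dimension_def dU by metis
  then have spU: "span {x, d1, d2, z} = UNIV" by (simp add: insert_commute)
  obtain a c k1 where h1: "br x d1 = a *s d1 + c *s d2 + k1 *s z"
    using coord3[of "br x d1" d1 d2 z] spD br_in_Dr[of x d1] by auto
  obtain b e k2 where h2: "br x d2 = b *s d1 + e *s d2 + k2 *s z"
    using coord3[of "br x d2" d1 d2 z] spD br_in_Dr[of x d2] by auto
  obtain f g hh where h3: "br d1 d2 = f *s d1 + g *s d2 + hh *s z"
    using coord3[of "br d1 d2" d1 d2 z] spD br_in_Dr[of d1 d2] by auto
  let ?v = "{br x d1, br x d2, br d1 d2}"
  have DrS: "Dr \<subseteq> span ?v"
  proof (rule Dr_sub[OF spU])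
    fix u v assume "u \<in> {x, d1, d2, z}" "v \<in> {x, d1, d2, z}"
    then have "u \<in> insert x (insert d1 (insert d2 Zc))" "v \<in> insert x (insert d1 (insert d2 Zc))"
      using zZ by auto
    then show "br u v \<in> span ?v"
      by (rule pairs3[rotated 3]) (auto intro: span_base)
  qed
  have indv: "independent ?v \<and> card ?v = dim Dr"
    by (rule indep_card) (use DrS card3_le[of "br x d1" "br x d2" "br d1 d2"] dD in auto)
  then have "card ?v = 3" using dD by simp
  then have distv: "distinct [br x d1, br x d2, br d1 d2]" by (rule distinct3)
  have t1: "br x (br d1 d2) = f *s br x d1 + g *s br x d2"
    using zZ by (simp add: h3 center_r)
  have t2: "br d1 (br d2 x) = - (e *s br d1 d2)"
    using zZ by (simp add: br_anti[of d2 x] h2 alt center_r)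
  have t3: "br d2 (br x d1) = - (a *s br d1 d2)"
    using zZ by (simp add: h1 alt center_r br_anti[of d2 d1])
  have "f *s br x d1 + g *s br x d2 + (-(a+e)) *s br d1 d2
        = br x (br d1 d2) + br d1 (br d2 x) + br d2 (br x d1)"
    by (simp add: t1 t2 t3 algebra_simps)
  also have "\<dots> = 0" by (rule jacobi)
  finally have "f = 0 \<and> g = 0 \<and> -(a+e) = 0"
    using indep3[of "br x d1" "br x d2" "br d1 d2" f g "-(a+e)"] indv distv by auto
  then have f0: "f = 0" and g0: "g = 0" and ea: "e = - a" by (auto simp: add_eq_0_iff2 eq_neg_iff_add_eq_0)
  have h3': "br d1 d2 = hh *s z" using h3 f0 g0 by simp
  have h2': "br x d2 = b *s d1 + (- a) *s d2 + k2 *s z" using h2 ea by simp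
  have hnz: "hh \<noteq> 0"
  proof
    assume "hh = 0"
    then have "0 \<in> ?v" using h3' by simp
    then have "dependent ?v" by (rule dependent_zero)
    then show False using indv by simp
  qed
  have detnz: "a*a + b*c \<noteq> 0"
  proof
    assume ab: "a*a + b*c = 0"
    show False
    proof (cases "a = 0 \<and> c = 0")
      case True
      have "1 *s br x d1 + 0 *s br x d2 + (-(k1/hh)) *s br d1 d2 = 0"
        using True hnz by (simp add: h1 h3')
      then show False using indep3[of "br x d1" "br x d2" "br d1 d2" 1 0 "-(k1/hh)"] indv distv by auto
    next
      case False
      have "a *s br x d1 + c *s br x d2
          = (a*a + c*b) *s d1 + (a*c + c*(-a)) *s d2 + (a*k1 + c*k2) *s z"
        unfolding h1 h2' by (rule comb3)
      also have "\<dots> = (a*k1 + c*k2) *s z" using ab by (simp add: algebra_simps)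
      moreover have "(-(a*k1 + c*k2)/hh) *s br d1 d2 = - ((a*k1 + c*k2) *s z)"
        using hnz by (simp add: h3' flip: scale_minus_left)
      ultimately have "a *s br x d1 + c *s br x d2 + (-(a*k1 + c*k2)/hh) *s br d1 d2 = 0"
        by simp
      then show False using indep3[of "br x d1" "br x d2" "br d1 d2" a c "-(a*k1 + c*k2)/hh"] indv distv False by auto
    qed
  qed
  define \<mu> where "\<mu> = csqrt (a*a + b*c)"
  have musq: "\<mu> * \<mu> = a*a + b*c" unfolding \<mu>_def by (metis power2_csqrt power2_eq_square)
  have munz: "\<mu> \<noteq> 0" using musq detnz by auto
  show ?thesis
  proof (cases "b = 0")
    case False
    show ?thesis
    proof (rule final[OF spU dU zZ hnz h3' h1 h2' munz])
      show "b*a + (\<mu> - a)*b = \<mu>*b" by (simp add: algebra_simps)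
      show "b*c - (\<mu> - a)*a = \<mu>*(\<mu> - a)" using musq by (simp add: algebra_simps)
      show "b*a + (-\<mu> - a)*b = -\<mu>*b" by (simp add: algebra_simps)
      show "b*c - (-\<mu> - a)*a = -\<mu>*(-\<mu> - a)" using musq by (simp add: algebra_simps)
      show "b*(-\<mu> - a) - (\<mu> - a)*b \<noteq> 0" using False munz by (simp add: algebra_simps)
    qed
  next
    case True
    then have anz: "a \<noteq> 0" using detnz by auto
    show ?thesis
    proof (rule final[OF spU dU zZ hnz h3' h1 h2' anz])
      show "(2*a)*a + c*b = a*(2*a)" using True by simp
      show "(2*a)*c - c*a = a*c" by (simp add: algebra_simps)
      show "0*a + 1*b = -a*0" using True by simp
      show "0*c - 1*a = -a*1" by simp
      show "(2*a)*1 - c*0 \<noteq> 0" using anz by simp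
    qed
  qed
qed

theorem main:
  assumes pure: "Zc \<subseteq> Dr" and nonnil: "\<And>k. lower_central sc br k \<noteq> {0}"
    and solv: "derived_series sc br m = {0}" and dD: "dim Dr = 3"
    and dZ: "dim (UNIV::'a set) - dim Zc = 3"
  shows "\<exists>x1 x2 x3 z.
           distinct [x1, x2, x3, z] \<and>
           \<not> dependent {x1, x2, x3, z} \<and>
           span {x1, x2, x3, z} = UNIV \<and>
           br x1 x2 = x2 \<and> br x1 x3 = - x3 \<and> br x2 x3 = z \<and>
           br x1 z = 0 \<and> br x2 z = 0 \<and> br x3 z = 0"
proof -
  have le: "dim Zc \<le> dim (UNIV::'a set)" by (rule dim_subset) simp
  then have dU: "dim (UNIV::'a set) = dim Zc + 3" using dZ by simp
  have DU: "Dr \<noteq> UNIV"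
  proof
    assume DU: "Dr = UNIV"
    have "derived_series sc br n = UNIV" for n
      by (induction n) (simp_all add: DU)
    then have "(UNIV::'a set) = {0}" using solv by simp
    then have "Dr \<subseteq> {0}" by simp
    then have "dim Dr = 0" by simp
    with dD show False by simp
  qed
  have sU: "span (UNIV::'a set) = UNIV" using span_superset by blast
  have "span Dr \<subset> span (UNIV::'a set)" using DU sU by auto
  then have "dim Dr < dim (UNIV::'a set)" by (rule dim_psubset)
  then have kge1: "1 \<le> dim Zc" using dD dU by simp
  have nDZ: "\<not> Dr \<subseteq> Zc"
  proof
    assume a: "Dr \<subseteq> Zc"
    have "lower_central sc br (Suc (Suc 0)) = lie_br_set sc br UNIV Dr" by simp
    also have "\<dots> = {0}" by (rule lc_sub_Z[OF a])
    finally show False using nonnil by blast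
  qed
  have "span Zc \<subset> span Dr" using pure nDZ by auto
  then have "dim Zc < dim Dr" by (rule dim_psubset)
  then have "dim Zc = 1 \<or> dim Zc = 2" using kge1 dD by auto
  then show ?thesis
  proof
    assume "dim Zc = 1"
    then show ?thesis using k1[OF dD _ _ pure DU] dU by simp
  next
    assume "dim Zc = 2"
    then have False using no_k2[OF nonnil dD dU _ pure] by simp
    then show ?thesis ..
  qed
qed


end

theorem theorem3p2:
  fixes sc :: "complex \<Rightarrow> 'a::ab_group_add \<Rightarrow> 'a" and br :: "'a \<Rightarrow> 'a \<Rightarrow> 'a"
  assumes "lie_algebra sc br"
    and "fin_dim_space sc"
    and "lie_pure sc br"
    and "\<not> lie_nilpotent sc br"
    and "lie_solvable sc br"
    and "lie_breadth sc br = 2"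
    and "vector_space.dim sc (lie_br_set sc br UNIV UNIV) = 3"
    and "vector_space.dim sc (UNIV :: 'a set) - vector_space.dim sc (lie_center br) = 3"
  shows "\<exists>x1 x2 x3 z.
           distinct [x1, x2, x3, z] \<and>
           \<not> module.dependent sc {x1, x2, x3, z} \<and>
           module.span sc {x1, x2, x3, z} = UNIV \<and>
           br x1 x2 = x2 \<and> br x1 x3 = - x3 \<and> br x2 x3 = z \<and>
           br x1 z = 0 \<and> br x2 z = 0 \<and> br x3 z = 0"
proof -
  from assms(1) have vs: "vector_space sc"
    and lr: "\<And>x. Vector_Spaces.linear sc sc (br x)"
    and ll: "\<And>y. Vector_Spaces.linear sc sc (\<lambda>x. br x y)"
    and al: "\<And>x. br x x = 0"
    and ja: "\<And>x y z. br x (br y z) + br y (br z x) + br z (br x y) = 0"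
    unfolding lie_algebra_def by auto
  interpret V: vector_space sc by (rule vs)
  from assms(2) obtain B where B: "finite B" "V.span B = UNIV"
    unfolding fin_dim_space_def by blast
  obtain C where C: "C \<subseteq> B" "V.independent C" "B \<subseteq> V.span C"
    using V.maximal_independent_subset[of B] by blast
  have fC: "finite C" using C(1) B(1) finite_subset by blast
  have "V.span B \<subseteq> V.span C" using C(3) V.span_mono V.span_span by blast
  then have sC: "V.span C = UNIV" using B(2) by blast
  have "lie_fd sc C br"
    unfolding lie_fd_def lie_fd_axioms_def finite_dimensional_vector_space_def
      finite_dimensional_vector_space_axioms_def
    using vs fC C(2) sC lr ll al ja by blast
  then interpret L: lie_fd sc C br .
  obtain m where m: "derived_series sc br m = {0}"
    using assms(5) unfolding lie_solvable_def by blast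
  show ?thesis
  proof (rule L.main[OF _ _ m])
    show "lie_center br \<subseteq> lie_br_set sc br UNIV UNIV"
      using assms(3) unfolding lie_pure_def .
    show "\<And>k. lower_central sc br k \<noteq> {0}"
      using assms(4) unfolding lie_nilpotent_def by blast
    show "V.dim (lie_br_set sc br UNIV UNIV) = 3" by (rule assms(7))
    show "V.dim (UNIV::'a set) - V.dim (lie_center br) = 3" by (rule assms(8))
  qed
qed

end
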